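(* Let $G$ be a minimal BTB graph and $1\le r<d\le |W|-|B|-1$. Then every TCD map $T$ on $G$ of rank $r$ into $\mathbb{CP}^r$ is, up to a projective transformation of $\mathbb{CP}^r$, the central projection $\pi_U\circ\hat T$ of a TCD map $\hat T$ on $G$ of rank $d$ into $\mathbb{CP}^d$, from some $\hat T$-admissible subspace $U\subset\mathbb{CP}^d$ of dimension $d-r-1$.
   Context: A BTB graph is a finite planar bipartite graph (black $B$, white $W$) in a closed disk or cactus, with boundary white vertices on the boundary and every black vertex of degree $3$. It is minimal if zig-zag paths (turning maximally left at white and right at black vertices) are never closed, never traverse an edge twice, and no two both traverse two distinct edges $e_1$ then $e_2$. A TCD map is $T:W\to\mathbb{CP}^d$ such that for each black vertex $b$ the images of its three white neighbours are pairwise distinct and lie on a line $L_b$. Its rank is the dimension of the span of its image. For a projective subspace $U\subset\mathbb{CP}^d$ of dimension $d-r-1$ and a complementary subspace $V$ of dimension $r$, the central projection $\pi_U:\mathbb{CP}^d\dashrightarrow V\cong\mathbb{CP}^r$ sends $P\notin U$ to $V\cap\mathrm{span}(U,P)$. $U$ is $\hat T$-admissible if no $\hat T(w)$ lies in $U$ and $U\cap L_b=\emptyset$ for every black vertex $b$; then $\pi_U\circ\hat T$ is a TCD map. *)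

theory Defs
  imports Complex_Main
begin

text \<open>We add one extra vertex inf ("the boundary") and, for every time a boundary
  white vertex touches the boundary, a stub edge from it to inf.  The resulting
  graph G' is a combinatorial map on the sphere (darts, edge involution alph,
  vertex rotation sig); cutting out a small disk around inf recovers G in a
  disk (one stub per boundary vertex) or a cactus (several stubs at pinch
  points).\<close>

record ('v, 'd) btb =
  Bv    :: "'v set"
  Wv    :: "'v set"
  infv  :: "'v"
  darts :: "'d set"
  vtx   :: "'d \<Rightarrow> 'v"
  alph  :: "'d \<Rightarrow> 'd"
  sig   :: "'d \<Rightarrow> 'd"

definition dart_conn :: "('v,'d) btb \<Rightarrow> ('d \<times> 'd) set" where
  "dart_conn G = {(d, sig G d) | d. d \<in> darts G} \<union> {(d, alph G d) | d. d \<in> darts G}"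

definition face_perm :: "('v,'d) btb \<Rightarrow> 'd \<Rightarrow> 'd" where
  "face_perm G = sig G \<circ> alph G"

definition faces :: "('v,'d) btb \<Rightarrow> 'd set set" where
  "faces G = (\<lambda>d. {(face_perm G ^^ n) d | n. True}) ` darts G"

definition btb_graph :: "('v,'d) btb \<Rightarrow> bool" where
  "btb_graph G \<longleftrightarrow>
     finite (darts G) \<and> finite (Bv G) \<and> finite (Wv G) \<and>
     Bv G \<inter> Wv G = {} \<and> infv G \<notin> Bv G \<union> Wv G \<and>
     (\<forall>d\<in>darts G. alph G d \<in> darts G \<and> alph G d \<noteq> d \<and> alph G (alph G d) = d) \<and>
     bij_betw (sig G) (darts G) (darts G) \<and>
     (\<forall>d\<in>darts G. vtx G (sig G d) = vtx G d) \<and>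
     (\<forall>d1\<in>darts G. \<forall>d2\<in>darts G. vtx G d1 = vtx G d2 \<longrightarrow> (\<exists>n. (sig G ^^ n) d1 = d2)) \<and>
     vtx G ` darts G \<subseteq> Bv G \<union> Wv G \<union> {infv G} \<and>
     infv G \<in> vtx G ` darts G \<and>
     (\<forall>d\<in>darts G. vtx G d \<in> Bv G \<longrightarrow> vtx G (alph G d) \<in> Wv G) \<and>
     (\<forall>d\<in>darts G. vtx G d \<in> Wv G \<longrightarrow> vtx G (alph G d) \<in> Bv G \<union> {infv G}) \<and>
     (\<forall>d\<in>darts G. vtx G d = infv G \<longrightarrow> vtx G (alph G d) \<in> Wv G) \<and>
     (\<forall>b\<in>Bv G. card {d \<in> darts G. vtx G d = b} = 3) \<and>
     (\<forall>d1\<in>darts G. \<forall>d2\<in>darts G. (d1, d2) \<in> (dart_conn G)\<^sup>*) \<and>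
     int (card (vtx G ` darts G)) - int (card (darts G) div 2) + int (card (faces G)) = 2"

text \<open>Oriented edges are darts: dart d is traversed from vtx d to vtx (alph d).
  Zig-zag step: turn maximally left (inverse rotation) at white, maximally
  right (rotation) at black vertices.\<close>

definition zz :: "('v,'d) btb \<Rightarrow> 'd \<Rightarrow> 'd" where
  "zz G d = (let a = alph G d in
     if vtx G a \<in> Wv G then inv_into (darts G) (sig G) a else sig G a)"

definition hits_bd :: "('v,'d) btb \<Rightarrow> 'd \<Rightarrow> bool" where
  "hits_bd G d \<longleftrightarrow> vtx G (alph G d) = infv G"

definition edge_dart :: "('v,'d) btb \<Rightarrow> 'd \<Rightarrow> bool" where
  "edge_dart G d \<longleftrightarrow> d \<in> darts G \<and> vtx G d \<noteq> infv G \<and> vtx G (alph G d) \<noteq> infv G"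

definition reach_before :: "('v,'d) btb \<Rightarrow> 'd \<Rightarrow> 'd \<Rightarrow> bool" where
  "reach_before G d d' \<longleftrightarrow>
     (\<exists>n. (zz G ^^ n) d = d' \<and> (\<forall>m<n. \<not> hits_bd G ((zz G ^^ m) d)))"

definition minimal_btb :: "('v,'d) btb \<Rightarrow> bool" where
  "minimal_btb G \<longleftrightarrow>
     \<comment> \<open>no closed zig-zag paths\<close>
     (\<forall>d\<in>darts G. \<exists>n. hits_bd G ((zz G ^^ n) d)) \<and>
     \<comment> \<open>no zig-zag path traverses an edge twice\<close>
     (\<forall>d. edge_dart G d \<longrightarrow> \<not> reach_before G d (alph G d)) \<and>
     \<comment> \<open>no two distinct zig-zag paths both traverse e1 then e2 (e1 \<noteq> e2)\<close>
     \<not> (\<exists>d1 d2. edge_dart G d1 \<and> edge_dart G d2 \<and>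
           d2 \<noteq> d1 \<and> d2 \<noteq> alph G d1 \<and>
           \<not> reach_before G d1 (alph G d1) \<and> \<not> reach_before G (alph G d1) d1 \<and>
           reach_before G d1 d2 \<and> reach_before G (alph G d1) (alph G d2))"

text \<open>C^n as functions nat => complex vanishing from index n on; a point of CP^n
  is represented by a nonzero vector of C^(n+1).\<close>

definition cvec :: "nat \<Rightarrow> (nat \<Rightarrow> complex) set" where
  "cvec n = {v. \<forall>i\<ge>n. v i = 0}"

definition proj_eq :: "(nat \<Rightarrow> complex) \<Rightarrow> (nat \<Rightarrow> complex) \<Rightarrow> bool" where
  "proj_eq x y \<longleftrightarrow> (\<exists>c. c \<noteq> 0 \<and> y = (\<lambda>i. c * x i))"

definition cspan :: "(nat \<Rightarrow> complex) set \<Rightarrow> (nat \<Rightarrow> complex) set" where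
  "cspan S = {v. \<exists>F c. finite F \<and> F \<subseteq> S \<and> v = (\<lambda>i. \<Sum>u\<in>F. c u * u i)}"

definition cindep :: "(nat \<Rightarrow> complex) set \<Rightarrow> bool" where
  "cindep F \<longleftrightarrow> (\<forall>c. (\<forall>i. (\<Sum>u\<in>F. c u * u i) = 0) \<longrightarrow> (\<forall>u\<in>F. c u = 0))"

definition cdim :: "(nat \<Rightarrow> complex) set \<Rightarrow> nat" where
  "cdim S = Max {card F | F. F \<subseteq> S \<and> finite F \<and> cindep F}"

text \<open>X is a linear subspace of C^n of (linear) dimension k, i.e. a projective
  subspace of CP^(n-1) of dimension k-1.\<close>
definition csubspace :: "nat \<Rightarrow> nat \<Rightarrow> (nat \<Rightarrow> complex) set \<Rightarrow> bool" where
  "csubspace n k X \<longleftrightarrow>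
     (\<exists>F. F \<subseteq> cvec n \<and> finite F \<and> card F = k \<and> cindep F \<and> X = cspan F)"

definition clinear_on :: "(nat \<Rightarrow> complex) set \<Rightarrow> ((nat \<Rightarrow> complex) \<Rightarrow> (nat \<Rightarrow> complex)) \<Rightarrow> bool" where
  "clinear_on V f \<longleftrightarrow>
     (\<forall>x\<in>V. \<forall>y\<in>V. f (\<lambda>i. x i + y i) = (\<lambda>i. f x i + f y i)) \<and>
     (\<forall>x\<in>V. \<forall>c. f (\<lambda>i. c * x i) = (\<lambda>i. c * f x i))"

definition nbrs :: "('v,'d) btb \<Rightarrow> 'v \<Rightarrow> 'v set" where
  "nbrs G b = {vtx G (alph G d) | d. d \<in> darts G \<and> vtx G d = b}"

definition tcd_map :: "('v,'d) btb \<Rightarrow> nat \<Rightarrow> ('v \<Rightarrow> nat \<Rightarrow> complex) \<Rightarrow> bool" where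
  "tcd_map G n T \<longleftrightarrow>
     (\<forall>w\<in>Wv G. T w \<in> cvec (n + 1) \<and> T w \<noteq> (\<lambda>i. 0)) \<and>
     (\<forall>b\<in>Bv G. \<forall>d1\<in>darts G. \<forall>d2\<in>darts G.
         vtx G d1 = b \<longrightarrow> vtx G d2 = b \<longrightarrow> d1 \<noteq> d2 \<longrightarrow>
         \<not> proj_eq (T (vtx G (alph G d1))) (T (vtx G (alph G d2)))) \<and>
     (\<forall>b\<in>Bv G. cdim (T ` nbrs G b) \<le> 2)"

text \<open>Rank = projective dimension of the span of the image.\<close>
definition tcd_rank :: "('v,'d) btb \<Rightarrow> ('v \<Rightarrow> nat \<Rightarrow> complex) \<Rightarrow> nat" where
  "tcd_rank G T = cdim (T ` Wv G) - 1"

text \<open>Admissibility of the projective subspace with linear cone U; the line L_b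
  is the span of the images of the white neighbours of b.\<close>
definition admissible :: "('v,'d) btb \<Rightarrow> ('v \<Rightarrow> nat \<Rightarrow> complex) \<Rightarrow> (nat \<Rightarrow> complex) set \<Rightarrow> bool" where
  "admissible G T U \<longleftrightarrow>
     (\<forall>w\<in>Wv G. T w \<notin> U) \<and>
     (\<forall>b\<in>Bv G. U \<inter> cspan (T ` nbrs G b) = {\<lambda>i. 0})"

end

theory Submission
  imports Defs "HOL-Library.Function_Algebras"
begin


definition sc :: "complex \<Rightarrow> ('a \<Rightarrow> complex) \<Rightarrow> 'a \<Rightarrow> complex" where "sc c f = (\<lambda>i. c * f i)"

interpretation VS: vector_space sc
  by unfold_locales (auto simp: sc_def fun_eq_iff algebra_simps)
interpretation VP: vector_space_pair "sc :: complex \<Rightarrow> ('a \<Rightarrow> complex) \<Rightarrow> _" "sc :: complex \<Rightarrow> ('b \<Rightarrow> complex) \<Rightarrow> _" ..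

lemma sc_apply[simp]: "sc c f i = c * f i" by (simp add: sc_def)

lemma sum_fun_apply: "(\<Sum>x\<in>A. f x) i = (\<Sum>x\<in>A. f x i)"
  by (induct A rule: infinite_finite_induct) auto

lemma sum_sc: "(\<Sum>a\<in>t. sc (r a) a) = (\<lambda>i. \<Sum>u\<in>t. r u * u i)"
  by (simp add: fun_eq_iff sum_fun_apply)

lemma cspan_eq: "cspan S = VS.span S"
  unfolding cspan_def VS.span_explicit sum_sc by blast

lemma cindep_iff: assumes "finite F" shows "cindep F \<longleftrightarrow> VS.independent F"
proof
  assume c: "cindep F"
  show "VS.independent F"
  proof (rule VS.independent_if_scalars_zero[OF assms])
    fix f x assume "(\<Sum>x\<in>F. sc (f x) x) = 0" "x \<in> F"
    then show "f x = 0" using c unfolding cindep_def sum_sc by (auto simp: fun_eq_iff)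
  qed
next
  assume i: "VS.independent F"
  show "cindep F" unfolding cindep_def
  proof (intro allI impI)
    fix c assume "\<forall>i. (\<Sum>u\<in>F. c u * u i) = 0"
    then have "(\<Sum>u\<in>F. sc (c u) u) = 0" by (simp add: sum_sc fun_eq_iff)
    then show "\<forall>u\<in>F. c u = 0" using i assms unfolding VS.dependent_explicit by blast
  qed
qed

definition ev :: "'a \<Rightarrow> 'a \<Rightarrow> complex" where "ev i = (\<lambda>j. if j = i then 1 else 0)"

lemma inj_ev: "inj ev"
  by (rule injI) (metis ev_def one_neq_zero)

lemma span_ev: assumes "finite A" shows "VS.span (ev ` A) = {x. \<forall>i. i \<notin> A \<longrightarrow> x i = 0}"
proof
  show "VS.span (ev ` A) \<subseteq> {x. \<forall>i. i \<notin> A \<longrightarrow> x i = 0}"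
  proof (rule VS.span_minimal)
    show "ev ` A \<subseteq> {x. \<forall>i. i \<notin> A \<longrightarrow> x i = 0}" by (auto simp: ev_def)
    show "VS.subspace {x. \<forall>i. i \<notin> A \<longrightarrow> x (i::'a) = 0}"
      unfolding VS.subspace_def by auto
  qed
next
  show "{x. \<forall>i. i \<notin> A \<longrightarrow> x i = 0} \<subseteq> VS.span (ev ` A)"
  proof
    fix x :: "'a \<Rightarrow> complex" assume x: "x \<in> {x. \<forall>i. i \<notin> A \<longrightarrow> x i = 0}"
    have "x = (\<Sum>i\<in>A. sc (x i) (ev i))"
    proof
      fix j
      have "(\<Sum>i\<in>A. sc (x i) (ev i)) j = (\<Sum>i\<in>A. if i = j then x i else 0)"
        unfolding sum_fun_apply by (intro sum.cong) (auto simp: ev_def)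
      also have "\<dots> = x j" using x assms by (simp add: sum.delta)
      finally show "x j = (\<Sum>i\<in>A. sc (x i) (ev i)) j" by simp
    qed
    also have "\<dots> \<in> VS.span (ev ` A)"
      by (intro VS.span_sum VS.span_scale VS.span_base) auto
    finally show "x \<in> VS.span (ev ` A)" .
  qed
qed

lemma indep_ev: assumes "finite A" shows "VS.independent (ev ` A)"
proof
  assume "VS.dependent (ev ` A)"
  then obtain a where a: "a \<in> A" "ev a \<in> VS.span (ev ` A - {ev a})"
    unfolding VS.dependent_def by auto
  have "ev ` A - {ev a} = ev ` (A - {a})" by (auto dest: injD[OF inj_ev])
  then have "ev a \<in> VS.span (ev ` (A - {a}))" using a by simp
  then show False using span_ev[of "A - {a}"] assms by (auto simp: ev_def)
qed

lemma cvec_span: "cvec n = VS.span (ev ` {..<n})"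
  by (subst span_ev) (auto simp: cvec_def)

lemma card_ev: "finite A \<Longrightarrow> card (ev ` A) = card A"
  by (rule card_image[OF inj_on_subset[OF inj_ev]]) simp

lemma indep_cvec_card:
  assumes "VS.independent F" "F \<subseteq> cvec n" shows "finite F \<and> card F \<le> n"
  using VS.independent_span_bound[of "ev ` {..<n}" F] assms cvec_span card_ev[of "{..<n}"]
  by auto

lemma indep_cvec_span:
  assumes "VS.independent F" "F \<subseteq> cvec n" "card F = n" shows "cvec n \<subseteq> VS.span F"
proof
  fix x assume x: "x \<in> cvec n"
  show "x \<in> VS.span F"
  proof (rule ccontr)
    assume "x \<notin> VS.span F"
    then have i: "VS.independent (insert x F)" using VS.independent_insertI assms by blast
    have fin: "finite F" using indep_cvec_card assms by blast
    have "x \<notin> F" using \<open>x \<notin> VS.span F\<close> VS.span_base by blast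
    then have "card (insert x F) = n + 1" using fin assms by simp
    moreover have "insert x F \<subseteq> cvec n" using x assms by auto
    ultimately show False using indep_cvec_card[OF i, of n] \<open>card (insert x F) = n + 1\<close> by linarith
  qed
qed

lemma cdim_set_finite: "finite S \<Longrightarrow> finite {card F | F. F \<subseteq> S \<and> finite F \<and> cindep F}"
  by (rule finite_subset[of _ "card ` Pow S"]) auto

lemma cdim_ge: assumes "finite S" "F \<subseteq> S" "VS.independent F" shows "card F \<le> cdim S"
proof -
  have "finite F" using assms finite_subset by blast
  then show ?thesis unfolding cdim_def using assms cindep_iff
    by (intro Max_ge[OF cdim_set_finite]) auto
qed

lemma cdim_obtain: assumes "finite S" obtains F where "F \<subseteq> S" "VS.independent F" "card F = cdim S"
proof -
  have "cindep {}" by (simp add: cindep_def)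
  then have "cdim S \<in> {card F | F. F \<subseteq> S \<and> finite F \<and> cindep F}"
    unfolding cdim_def by (intro Max_in[OF cdim_set_finite[OF assms]]) auto
  then show ?thesis using that cindep_iff by auto
qed

lemma cdim_le: assumes "finite S" "\<And>F. F \<subseteq> S \<Longrightarrow> VS.independent F \<Longrightarrow> card F \<le> n"
  shows "cdim S \<le> n"
  using cdim_obtain[OF assms(1)] assms(2) by metis

lemma zero_fun_lam: "(\<lambda>i. 0::complex) = 0" by (simp add: fun_eq_iff)

lemma proj_eq_refl: "proj_eq x x"
  unfolding proj_eq_def by (rule exI[of _ 1]) simp

lemma three_rel:
  fixes T1 T2 T3 :: "nat \<Rightarrow> complex"
  assumes "T2 \<noteq> 0" "T3 \<noteq> 0" "\<not> proj_eq T2 T3"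
    and "sc a1 T1 + sc a2 T2 + sc a3 T3 = 0" "a1 = 0"
  shows "a2 = 0 \<and> a3 = 0"
proof -
  have e: "sc a2 T2 = - sc a3 T3" using assms(4,5)
    by (simp add: eq_neg_iff_add_eq_0)
  show ?thesis
  proof (cases "a3 = 0")
    case True
    then show ?thesis using e assms(1) by simp
  next
    case False
    have "T3 = (\<lambda>i. (- a2 / a3) * T2 i)"
    proof
      fix i have "a2 * T2 i = - (a3 * T3 i)" using fun_cong[OF e, of i] by simp
      then show "T3 i = (- a2 / a3) * T2 i" using False by (simp add: field_simps)
    qed
    moreover have "a2 \<noteq> 0"
    proof
      assume "a2 = 0" then have "sc a3 T3 = 0" using e by simp
      then show False using False assms(2) by simp
    qed
    ultimately have "proj_eq T2 T3" unfolding proj_eq_def using False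
      by (intro exI[of _ "- a2 / a3"]) simp
    then show ?thesis using assms(3) by simp
  qed
qed

lemma btb_card3: "btb_graph G \<Longrightarrow> b \<in> Bv G \<Longrightarrow> card {d \<in> darts G. vtx G d = b} = 3"
  unfolding btb_graph_def by (elim conjE) blast

lemma btb_BW: "btb_graph G \<Longrightarrow> d \<in> darts G \<Longrightarrow> vtx G d \<in> Bv G \<Longrightarrow> vtx G (alph G d) \<in> Wv G"
  unfolding btb_graph_def by (elim conjE) blast

lemma btb_fin: "btb_graph G \<Longrightarrow> finite (Wv G) \<and> finite (Bv G)"
  unfolding btb_graph_def by (elim conjE) blast

lemma tcd_W: "tcd_map G n T \<Longrightarrow> w \<in> Wv G \<Longrightarrow> T w \<in> cvec (n + 1) \<and> T w \<noteq> 0"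
  unfolding tcd_map_def zero_fun_lam by (elim conjE) blast

lemma tcd_cdim: "tcd_map G n T \<Longrightarrow> b \<in> Bv G \<Longrightarrow> cdim (T ` nbrs G b) \<le> 2"
  unfolding tcd_map_def by (elim conjE) blast

lemma black_struct:
  fixes T :: "'v \<Rightarrow> nat \<Rightarrow> complex"
  assumes G: "btb_graph G" and T: "tcd_map G r T" and b: "b \<in> Bv G"
  obtains w1 w2 w3 a1 a2 a3 where
    "nbrs G b = {w1, w2, w3}" "w1 \<noteq> w2" "w1 \<noteq> w3" "w2 \<noteq> w3"
    "w1 \<in> Wv G" "w2 \<in> Wv G" "w3 \<in> Wv G"
    "a1 \<noteq> 0" "a2 \<noteq> 0" "a3 \<noteq> 0"
    "sc a1 (T w1) + sc a2 (T w2) + sc a3 (T w3) = 0"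
    "\<And>x1 x2 x3. sc x1 (T w1) + sc x2 (T w2) + sc x3 (T w3) = 0 \<Longrightarrow>
        \<exists>k. x1 = k * a1 \<and> x2 = k * a2 \<and> x3 = k * a3"
proof -
  have "card {d \<in> darts G. vtx G d = b} = 3" using G b by (rule btb_card3)
  then obtain d1 d2 d3 where D: "{d \<in> darts G. vtx G d = b} = {d1, d2, d3}"
    "d1 \<noteq> d2" "d2 \<noteq> d3" "d1 \<noteq> d3"
    unfolding card_3_iff by blast
  have dd: "d1 \<in> darts G" "d2 \<in> darts G" "d3 \<in> darts G" "vtx G d1 = b" "vtx G d2 = b" "vtx G d3 = b"
    using D(1) by blast+
  define w1 where "w1 = vtx G (alph G d1)"
  define w2 where "w2 = vtx G (alph G d2)"
  define w3 where "w3 = vtx G (alph G d3)"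
  have "nbrs G b = (\<lambda>d. vtx G (alph G d)) ` {d \<in> darts G. vtx G d = b}"
    unfolding nbrs_def by blast
  then have nb: "nbrs G b = {w1, w2, w3}"
    unfolding w1_def w2_def w3_def using D(1) by simp
  have inW: "w1 \<in> Wv G" "w2 \<in> Wv G" "w3 \<in> Wv G"
    using btb_BW[OF G] b dd unfolding w1_def w2_def w3_def by auto
  have np: "\<And>d d'. d \<in> {d1,d2,d3} \<Longrightarrow> d' \<in> {d1,d2,d3} \<Longrightarrow> d \<noteq> d' \<Longrightarrow>
      \<not> proj_eq (T (vtx G (alph G d))) (T (vtx G (alph G d')))"
  proof -
    fix d d' assume "d \<in> {d1,d2,d3}" "d' \<in> {d1,d2,d3}" "d \<noteq> d'"
    moreover have "\<forall>d1\<in>darts G. \<forall>d2\<in>darts G.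
         vtx G d1 = b \<longrightarrow> vtx G d2 = b \<longrightarrow> d1 \<noteq> d2 \<longrightarrow>
         \<not> proj_eq (T (vtx G (alph G d1))) (T (vtx G (alph G d2)))"
      using T b unfolding tcd_map_def by (elim conjE) blast
    ultimately show "\<not> proj_eq (T (vtx G (alph G d))) (T (vtx G (alph G d')))"
      using dd by blast
  qed
  have p12: "\<not> proj_eq (T w1) (T w2)" "\<not> proj_eq (T w2) (T w1)"
   and p13: "\<not> proj_eq (T w1) (T w3)" "\<not> proj_eq (T w3) (T w1)"
   and p23: "\<not> proj_eq (T w2) (T w3)" "\<not> proj_eq (T w3) (T w2)"
    using np[of d1 d2] np[of d2 d1] np[of d1 d3] np[of d3 d1] np[of d2 d3] np[of d3 d2] D(2-4)
    unfolding w1_def w2_def w3_def by auto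
  have nz: "T w1 \<noteq> 0" "T w2 \<noteq> 0" "T w3 \<noteq> 0"
    using tcd_W[OF T] inW by auto
  have dT: "T w1 \<noteq> T w2" "T w1 \<noteq> T w3" "T w2 \<noteq> T w3"
    using p12(1) p13(1) p23(1) proj_eq_refl[of "T w1"] proj_eq_refl[of "T w2"] by auto
  then have dw: "w1 \<noteq> w2" "w1 \<noteq> w3" "w2 \<noteq> w3" by auto
  have cd: "cdim (T ` nbrs G b) \<le> 2" using tcd_cdim[OF T b] .
  have dep: "VS.dependent {T w1, T w2, T w3}"
  proof (rule ccontr)
    assume i: "\<not> VS.dependent {T w1, T w2, T w3}"
    have "card {T w1, T w2, T w3} \<le> cdim (T ` nbrs G b)"
      by (rule cdim_ge[OF _ _ i]) (auto simp: nb)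
    then show False using dT cd by simp
  qed
  then obtain t u where tu: "finite t" "t \<subseteq> {T w1, T w2, T w3}" "(\<Sum>v\<in>t. sc (u v) v) = 0"
     "\<exists>v\<in>t. u v \<noteq> 0"
    unfolding VS.dependent_explicit by blast
  define u' where "u' v = (if v \<in> t then u v else 0)" for v
  have "(\<Sum>v\<in>{T w1, T w2, T w3}. sc (u' v) v) = (\<Sum>v\<in>t. sc (u' v) v)"
    by (rule sum.mono_neutral_right) (use tu in \<open>auto simp: u'_def\<close>)
  also have "\<dots> = 0" using tu(3) by (simp add: u'_def)
  finally have "sc (u' (T w1)) (T w1) + sc (u' (T w2)) (T w2) + sc (u' (T w3)) (T w3) = 0"
    using dT by (simp add: add.assoc)
  moreover have "u' (T w1) \<noteq> 0 \<or> u' (T w2) \<noteq> 0 \<or> u' (T w3) \<noteq> 0"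
    using tu(2,4) by (auto simp: u'_def)
  ultimately obtain a1 a2 a3 where A: "sc a1 (T w1) + sc a2 (T w2) + sc a3 (T w3) = 0"
     "a1 \<noteq> 0 \<or> a2 \<noteq> 0 \<or> a3 \<noteq> 0" by blast
  have key: "\<And>x1 x2 x3. sc x1 (T w1) + sc x2 (T w2) + sc x3 (T w3) = 0 \<Longrightarrow>
      (x1 = 0 \<longrightarrow> x2 = 0 \<and> x3 = 0) \<and> (x2 = 0 \<longrightarrow> x1 = 0 \<and> x3 = 0) \<and> (x3 = 0 \<longrightarrow> x1 = 0 \<and> x2 = 0)"
  proof -
    fix x1 x2 x3 assume h: "sc x1 (T w1) + sc x2 (T w2) + sc x3 (T w3) = 0"
    have h2: "sc x2 (T w2) + sc x1 (T w1) + sc x3 (T w3) = 0" using h by (simp add: ac_simps)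
    have h3: "sc x3 (T w3) + sc x1 (T w1) + sc x2 (T w2) = 0" using h by (simp add: ac_simps)
    show "?thesis x1 x2 x3"
      using three_rel[OF nz(2,3) p23(1) h] three_rel[OF nz(1,3) p13(1) h2]
        three_rel[OF nz(1,2) p12(1) h3] by blast
  qed
  have anz: "a1 \<noteq> 0" "a2 \<noteq> 0" "a3 \<noteq> 0" using key[OF A(1)] A(2) by blast+
  have uniq: "\<exists>k. x1 = k * a1 \<and> x2 = k * a2 \<and> x3 = k * a3"
    if h: "sc x1 (T w1) + sc x2 (T w2) + sc x3 (T w3) = 0" for x1 x2 x3
  proof -
    define k where "k = x1 / a1"
    have "sc (x1 - k * a1) (T w1) + sc (x2 - k * a2) (T w2) + sc (x3 - k * a3) (T w3) = 0"
    proof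
      fix i
      have "x1 * T w1 i + x2 * T w2 i + x3 * T w3 i = 0" using fun_cong[OF h, of i] by simp
      moreover have "a1 * T w1 i + a2 * T w2 i + a3 * T w3 i = 0" using fun_cong[OF A(1), of i] by simp
      note hX = \<open>x1 * T w1 i + x2 * T w2 i + x3 * T w3 i = 0\<close>
      note hA = \<open>a1 * T w1 i + a2 * T w2 i + a3 * T w3 i = 0\<close>
      have "(x1 - k * a1) * T w1 i + (x2 - k * a2) * T w2 i + (x3 - k * a3) * T w3 i =
          (x1 * T w1 i + x2 * T w2 i + x3 * T w3 i) - k * (a1 * T w1 i + a2 * T w2 i + a3 * T w3 i)"
        by (simp add: algebra_simps)
      then have "(x1 - k * a1) * T w1 i + (x2 - k * a2) * T w2 i + (x3 - k * a3) * T w3 i = 0"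
        unfolding hX hA by simp
      then show "(sc (x1 - k * a1) (T w1) + sc (x2 - k * a2) (T w2) + sc (x3 - k * a3) (T w3)) i = 0 i"
        by simp
    qed
    moreover have "x1 - k * a1 = 0" using anz by (simp add: k_def)
    ultimately have "x2 - k * a2 = 0 \<and> x3 - k * a3 = 0" using key by blast
    then show ?thesis using \<open>x1 - k * a1 = 0\<close> by (intro exI[of _ k]) simp
  qed
  show ?thesis using that[OF nb dw inW anz A(1) uniq] by blast
qed


lemma expand_fun: assumes "finite A" "\<forall>i. i \<notin> A \<longrightarrow> x i = 0"
  shows "x = (\<Sum>i\<in>A. sc (x i) (ev i))"
proof
  fix j
  have "(\<Sum>i\<in>A. sc (x i) (ev i)) j = (\<Sum>i\<in>A. if i = j then x i else 0)"
    unfolding sum_fun_apply by (intro sum.cong) (auto simp: ev_def)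
  also have "\<dots> = x j" using assms by (simp add: sum.delta)
  finally show "x j = (\<Sum>i\<in>A. sc (x i) (ev i)) j" by simp
qed

lemma linear_Phi: "Vector_Spaces.linear sc sc (\<lambda>c. \<Sum>w\<in>A. sc (c w) (F w))"
  unfolding Vector_Spaces.linear_iff
  by (auto simp: VS.vector_space_axioms fun_eq_iff sum_fun_apply sum.distrib sum_distrib_left algebra_simps)

lemma solve3: assumes "(a3::complex) \<noteq> 0" "a1*x1 + a2*x2 + a3*x3 = 0" shows "x3 = (-a1/a3)*x1 + (-a2/a3)*x2"
proof -
  have "a3*x3 = (a1*x1 + a2*x2 + a3*x3) - (a1*x1 + a2*x2)" by simp
  also have "\<dots> = -(a1*x1 + a2*x2)" using assms(2) by simp
  finally have e: "a3*x3 = -(a1*x1 + a2*x2)" .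
  have "x3 = (a3*x3)/a3" using assms(1) by simp
  also have "\<dots> = (-a1/a3)*x1 + (-a2/a3)*x2" unfolding e using assms(1) by (simp add: field_simps)
  finally show ?thesis .
qed

lemma sum3:
  fixes F :: "'v \<Rightarrow> nat \<Rightarrow> complex"
  assumes "finite W" "w1 \<in> W" "w2 \<in> W" "w3 \<in> W" "w1 \<noteq> w2" "w1 \<noteq> w3" "w2 \<noteq> w3"
    "\<forall>w. w \<notin> {w1, w2, w3} \<longrightarrow> c w = 0"
  shows "(\<Sum>w\<in>W. sc (c w) (F w)) = sc (c w1) (F w1) + sc (c w2) (F w2) + sc (c w3) (F w3)"
proof -
  have "(\<Sum>w\<in>W. sc (c w) (F w)) = (\<Sum>w\<in>{w1, w2, w3}. sc (c w) (F w))"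
    by (rule sum.mono_neutral_right) (use assms in auto)
  also have "\<dots> = sc (c w1) (F w1) + sc (c w2) (F w2) + sc (c w3) (F w3)"
    using assms by (simp add: add.assoc)
  finally show ?thesis .
qed

lemma nbrs_W: assumes "btb_graph G" "b \<in> Bv G" shows "nbrs G b \<subseteq> Wv G"
proof
  fix w assume "w \<in> nbrs G b"
  then obtain d where d: "d \<in> darts G" "vtx G d = b" "w = vtx G (alph G d)" unfolding nbrs_def by blast
  show "w \<in> Wv G" using btb_BW[OF assms(1) d(1)] d(2,3) assms(2) by simp
qed

lemma rel_span:
  fixes T :: "'v \<Rightarrow> nat \<Rightarrow> complex"
  assumes G: "btb_graph G" and T: "tcd_map G r T" and b: "b \<in> Bv G"
  shows "\<exists>cb. (\<forall>w. w \<notin> nbrs G b \<longrightarrow> cb w = 0) \<and> (\<Sum>w\<in>Wv G. sc (cb w) (T w)) = 0 \<and>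
     (\<forall>c. (\<forall>w. w \<notin> nbrs G b \<longrightarrow> c w = 0) \<longrightarrow> (\<Sum>w\<in>Wv G. sc (c w) (T w)) = 0 \<longrightarrow> c \<in> VS.span {cb})"
proof -
  obtain w1 w2 w3 a1 a2 a3 where S: "nbrs G b = {w1, w2, w3}" "w1 \<noteq> w2" "w1 \<noteq> w3" "w2 \<noteq> w3"
    "w1 \<in> Wv G" "w2 \<in> Wv G" "w3 \<in> Wv G"
    "a1 \<noteq> 0" "a2 \<noteq> 0" "a3 \<noteq> 0"
    "sc a1 (T w1) + sc a2 (T w2) + sc a3 (T w3) = 0"
    "\<And>x1 x2 x3. sc x1 (T w1) + sc x2 (T w2) + sc x3 (T w3) = 0 \<Longrightarrow>
        \<exists>k. x1 = k * a1 \<and> x2 = k * a2 \<and> x3 = k * a3"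
    by (rule black_struct[OF G T b]) (rule that)
  have fW: "finite (Wv G)" using btb_fin[OF G] by simp
  define cb where "cb w = (if w = w1 then a1 else if w = w2 then a2 else if w = w3 then a3 else 0)" for w
  have s: "(\<Sum>w\<in>Wv G. sc (c w) (T w)) = sc (c w1) (T w1) + sc (c w2) (T w2) + sc (c w3) (T w3)"
    if "\<forall>w. w \<notin> nbrs G b \<longrightarrow> c w = 0" for c
    using that S(1) by (intro sum3[OF fW S(5-7) S(2-4)]) simp
  have cbs: "\<forall>w. w \<notin> nbrs G b \<longrightarrow> cb w = 0" using S(1) by (auto simp: cb_def)
  have "cb w1 = a1" "cb w2 = a2" "cb w3 = a3" using S(2-4) by (auto simp: cb_def)
  then have c0: "(\<Sum>w\<in>Wv G. sc (cb w) (T w)) = 0" using s[OF cbs] S(11) by simp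
  have sp: "\<forall>c. (\<forall>w. w \<notin> nbrs G b \<longrightarrow> c w = 0) \<longrightarrow> (\<Sum>w\<in>Wv G. sc (c w) (T w)) = 0 \<longrightarrow> c \<in> VS.span {cb}"
  proof (intro allI impI)
    fix c assume c: "\<forall>w. w \<notin> nbrs G b \<longrightarrow> c w = 0" "(\<Sum>w\<in>Wv G. sc (c w) (T w)) = 0"
    have "sc (c w1) (T w1) + sc (c w2) (T w2) + sc (c w3) (T w3) = 0" using s[OF c(1)] c(2) by simp
    then obtain k where k: "c w1 = k * a1" "c w2 = k * a2" "c w3 = k * a3"
      using S(12) by blast
    have "c = sc k cb"
    proof
      fix w show "c w = sc k cb w" using k c(1) S(1) S(2-4) by (simp add: cb_def)
    qed
    then show "c \<in> VS.span {cb}" unfolding VS.span_singleton by blast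
  qed
  show ?thesis
    apply (rule exI[of _ cb])
    apply (rule conjI, rule cbs)
    apply (rule conjI, rule c0)
    apply (rule sp)
    done
qed

lemma lift_black:
  fixes T That :: "'v \<Rightarrow> nat \<Rightarrow> complex"
  assumes G: "btb_graph G" and T: "tcd_map G r T" and b: "b \<in> Bv G"
    and restr: "\<And>w i. w \<in> Wv G \<Longrightarrow> i \<le> r \<Longrightarrow> That w i = T w i"
    and rel: "\<And>c. \<forall>w. w \<notin> nbrs G b \<longrightarrow> c w = 0 \<Longrightarrow> (\<Sum>w\<in>Wv G. sc (c w) (T w)) = 0 \<Longrightarrow>
         (\<Sum>w\<in>Wv G. sc (c w) (That w)) = 0"
  shows "cdim (That ` nbrs G b) \<le> 2"
    and "\<And>x. x \<in> VS.span (That ` nbrs G b) \<Longrightarrow> \<forall>i\<le>r. x i = 0 \<Longrightarrow> x = 0"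
proof -
  obtain w1 w2 w3 a1 a2 a3 where S: "nbrs G b = {w1, w2, w3}" "w1 \<noteq> w2" "w1 \<noteq> w3" "w2 \<noteq> w3"
    "w1 \<in> Wv G" "w2 \<in> Wv G" "w3 \<in> Wv G"
    "a1 \<noteq> 0" "a2 \<noteq> 0" "a3 \<noteq> 0"
    "sc a1 (T w1) + sc a2 (T w2) + sc a3 (T w3) = 0"
    "\<And>x1 x2 x3. sc x1 (T w1) + sc x2 (T w2) + sc x3 (T w3) = 0 \<Longrightarrow>
        \<exists>k. x1 = k * a1 \<and> x2 = k * a2 \<and> x3 = k * a3"
    by (rule black_struct[OF G T b]) (rule that)
  have fW: "finite (Wv G)" using btb_fin[OF G] by simp
  have s: "(\<Sum>w\<in>Wv G. sc (c w) (F w)) = sc (c w1) (F w1) + sc (c w2) (F w2) + sc (c w3) (F w3)"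
    if "\<forall>w. w \<notin> nbrs G b \<longrightarrow> c w = 0" for c and F :: "'v \<Rightarrow> nat \<Rightarrow> complex"
    using that S(1) by (intro sum3[OF fW S(5-7) S(2-4)]) simp
  define cb where "cb w = (if w = w1 then a1 else if w = w2 then a2 else if w = w3 then a3 else 0)" for w
  have cbs: "\<forall>w. w \<notin> nbrs G b \<longrightarrow> cb w = 0" using S(1) by (auto simp: cb_def)
  have cbv: "cb w1 = a1" "cb w2 = a2" "cb w3 = a3" using S(2-4) by (auto simp: cb_def)
  have "(\<Sum>w\<in>Wv G. sc (cb w) (That w)) = 0"
    by (rule rel[OF cbs]) (simp add: s[OF cbs] cbv S(11))
  then have h0: "sc a1 (That w1) + sc a2 (That w2) + sc a3 (That w3) = 0"
    by (simp add: s[OF cbs] cbv)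
  have th3: "That w3 = sc (- a1 / a3) (That w1) + sc (- a2 / a3) (That w2)"
  proof
    fix i
    have "a1 * That w1 i + a2 * That w2 i + a3 * That w3 i = 0" using fun_cong[OF h0, of i] by simp
    then show "That w3 i = (sc (- a1 / a3) (That w1) + sc (- a2 / a3) (That w2)) i"
      using solve3[OF S(10)] by simp
  qed
  then have "That w3 \<in> VS.span {That w1, That w2}"
    by (subst th3) (intro VS.span_add VS.span_scale VS.span_base; simp)
  then have sub: "That ` nbrs G b \<subseteq> VS.span {That w1, That w2}"
  proof -
    have "That w1 \<in> VS.span {That w1, That w2}" "That w2 \<in> VS.span {That w1, That w2}"
      by (simp_all add: VS.span_base)
    then show ?thesis using S(1) \<open>That w3 \<in> VS.span {That w1, That w2}\<close> by auto
  qed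
  show "cdim (That ` nbrs G b) \<le> 2"
  proof (rule cdim_le)
    show "finite (That ` nbrs G b)" using S(1) by simp
    fix F assume "F \<subseteq> That ` nbrs G b" "VS.independent F"
    then have "F \<subseteq> VS.span {That w1, That w2}" using sub by blast
    then have "card F \<le> card {That w1, That w2}"
      using VS.independent_span_bound[OF _ \<open>VS.independent F\<close>] by simp
    also have "\<dots> \<le> 2" by (simp add: card_insert_le_m1)
    finally show "card F \<le> 2" .
  qed
  fix x assume x: "x \<in> VS.span (That ` nbrs G b)" "\<forall>i\<le>r. x i = 0"
  have "x \<in> VS.span (insert (That w1) (insert (That w2) {That w3}))" using x S(1) by simp
  then obtain k1 where "x - sc k1 (That w1) \<in> VS.span (insert (That w2) {That w3})"
    unfolding VS.span_breakdown_eq by blast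
  then obtain k2 where "x - sc k1 (That w1) - sc k2 (That w2) \<in> VS.span {That w3}"
    unfolding VS.span_breakdown_eq by blast
  then obtain k3 where "x - sc k1 (That w1) - sc k2 (That w2) = sc k3 (That w3)"
    unfolding VS.span_singleton by blast
  then have xe: "x = sc k1 (That w1) + sc k2 (That w2) + sc k3 (That w3)"
    by (simp add: algebra_simps)
  define c where "c w = (if w = w1 then k1 else if w = w2 then k2 else if w = w3 then k3 else 0)" for w
  have cs: "\<forall>w. w \<notin> nbrs G b \<longrightarrow> c w = 0" using S(1) by (auto simp: c_def)
  have cv: "c w1 = k1" "c w2 = k2" "c w3 = k3" using S(2-4) by (auto simp: c_def)
  have Tz: "T w i = 0" if "w \<in> Wv G" "r < i" for w i
    using tcd_W[OF T that(1)] that(2) unfolding cvec_def by auto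
  have "sc k1 (T w1) + sc k2 (T w2) + sc k3 (T w3) = 0"
  proof
    fix i show "(sc k1 (T w1) + sc k2 (T w2) + sc k3 (T w3)) i = 0 i"
    proof (cases "i \<le> r")
      case True
      have "x i = 0" using x(2) True by simp
      then have "k1 * That w1 i + k2 * That w2 i + k3 * That w3 i = 0" using fun_cong[OF xe, of i] by simp
      then show ?thesis using restr[OF S(5) True] restr[OF S(6) True] restr[OF S(7) True] by simp
    next
      case False
      then show ?thesis using Tz[OF S(5)] Tz[OF S(6)] Tz[OF S(7)] by simp
    qed
  qed
  then have "(\<Sum>w\<in>Wv G. sc (c w) (That w)) = 0"
    by (intro rel[OF cs]) (simp add: s[OF cs] cv)
  then show "x = 0" using xe by (simp add: s[OF cs] cv)
qed

lemma proj_lift: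
  fixes T That :: "'v \<Rightarrow> nat \<Rightarrow> complex"
  assumes "\<And>i. i \<le> r \<Longrightarrow> That w1 i = T w1 i" "\<And>i. i \<le> r \<Longrightarrow> That w2 i = T w2 i"
    "\<And>i. r < i \<Longrightarrow> T w1 i = 0" "\<And>i. r < i \<Longrightarrow> T w2 i = 0"
    "proj_eq (That w1) (That w2)"
  shows "proj_eq (T w1) (T w2)"
proof -
  obtain c where c: "c \<noteq> 0" "That w2 = (\<lambda>i. c * That w1 i)" using assms(5) unfolding proj_eq_def by blast
  have "T w2 = (\<lambda>i. c * T w1 i)"
  proof
    fix i show "T w2 i = c * T w1 i"
    proof (cases "i \<le> r")
      case True
      then show ?thesis using assms(1)[OF True] assms(2)[OF True] fun_cong[OF c(2), of i] by simp
    next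
      case False
      then have "r < i" by simp
      then show ?thesis using assms(3)[OF \<open>r < i\<close>] assms(4)[OF \<open>r < i\<close>] by simp
    qed
  qed
  then show ?thesis using c(1) unfolding proj_eq_def by blast
qed



theorem proposition4p9:
  fixes G :: "('v, 'd) btb" and T :: "'v \<Rightarrow> nat \<Rightarrow> complex" and r d :: nat
  assumes "btb_graph G" and "minimal_btb G"
    and "1 \<le> r" and "r < d" and "int d \<le> int (card (Wv G)) - int (card (Bv G)) - 1"
    and "tcd_map G r T" and "tcd_rank G T = r"
  shows "\<exists>That U V \<phi>.
           tcd_map G d That \<and> tcd_rank G That = d \<and>
           csubspace (d + 1) (d - r) U \<and> admissible G That U \<and>
           csubspace (d + 1) (r + 1) V \<and> U \<inter> V = {\<lambda>i. 0} \<and>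
           clinear_on V \<phi> \<and> bij_betw \<phi> V (cvec (r + 1)) \<and>
           (\<forall>w\<in>Wv G. \<exists>v. v \<in> V \<inter> cspan (U \<union> {That w}) \<and> v \<noteq> (\<lambda>i. 0) \<and>
                          proj_eq (T w) (\<phi> v))"
proof -
  note G = assms(1) and T = assms(6)
  define W where "W = Wv G"
  have finW: "finite W" and finB: "finite (Bv G)" using btb_fin[OF G] W_def by auto
  have "int (d + 1 + card (Bv G)) \<le> int (card W)" using assms(5) unfolding W_def by simp
  then have dle: "d + 1 + card (Bv G) \<le> card W" by linarith
  have cdT: "cdim (T ` W) = r + 1" using assms(3,7) unfolding tcd_rank_def W_def by linarith
  have Tcv: "T w \<in> cvec (r + 1)" "T w \<noteq> 0" if "w \<in> W" for w
    using tcd_W[OF T, of w] that W_def by auto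
  have Tz: "T w i = 0" if "w \<in> W" "r < i" for w i
    using Tcv(1)[OF that(1)] that(2) unfolding cvec_def by auto
  define Phi where "Phi = (\<lambda>c::'v\<Rightarrow>complex. \<Sum>w\<in>W. sc (c w) (T w))"
  have linPhi: "Vector_Spaces.linear sc sc Phi" unfolding Phi_def by (rule linear_Phi)
  define CW where "CW = {c::'v\<Rightarrow>complex. \<forall>w. w \<notin> W \<longrightarrow> c w = 0}"
  have CW_span: "CW = VS.span (ev ` W)" using span_ev[OF finW] CW_def by simp
  have ev_CW: "ev w \<in> CW" if "w \<in> W" for w using that by (auto simp: CW_def ev_def)
  have Phi_ev: "Phi (ev w) = T w" if "w \<in> W" for w
  proof -
    have "Phi (ev w) = (\<Sum>v\<in>W. if v = w then T v else 0)"
      unfolding Phi_def by (intro sum.cong) (auto simp: ev_def)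
    also have "\<dots> = T w" using finW that by (simp add: sum.delta')
    finally show ?thesis .
  qed
  have Phi_cv: "Phi c \<in> cvec (r + 1)" for c
    using Tz unfolding Phi_def cvec_def by (simp add: sum_fun_apply)
  have "\<forall>b\<in>Bv G. \<exists>cb. (\<forall>w. w \<notin> nbrs G b \<longrightarrow> cb w = 0) \<and> Phi cb = 0 \<and>
     (\<forall>c. (\<forall>w. w \<notin> nbrs G b \<longrightarrow> c w = 0) \<longrightarrow> Phi c = 0 \<longrightarrow> c \<in> VS.span {cb})"
    using rel_span[OF G T] unfolding Phi_def W_def by blast
  then obtain cbf where cbf: "\<And>b. b \<in> Bv G \<Longrightarrow> (\<forall>w. w \<notin> nbrs G b \<longrightarrow> cbf b w = 0)"
     "\<And>b. b \<in> Bv G \<Longrightarrow> Phi (cbf b) = 0"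
     "\<And>b c. b \<in> Bv G \<Longrightarrow> (\<forall>w. w \<notin> nbrs G b \<longrightarrow> c w = 0) \<Longrightarrow> Phi c = 0 \<Longrightarrow> c \<in> VS.span {cbf b}"
    by metis
  have nbW: "nbrs G b \<subseteq> W" if "b \<in> Bv G" for b using nbrs_W[OF G that] W_def by simp
  define Rset where "Rset = cbf ` Bv G"
  have Rset_CW: "Rset \<subseteq> CW"
  proof
    fix c assume "c \<in> Rset"
    then obtain b where "b \<in> Bv G" "c = cbf b" unfolding Rset_def by blast
    then show "c \<in> CW" using cbf(1)[of b] nbW[of b] unfolding CW_def by blast
  qed
  have Rset_Phi: "Phi c = 0" if "c \<in> Rset" for c using that cbf(2) unfolding Rset_def by blast
  have finR: "finite Rset" and cardR: "card Rset \<le> card (Bv G)"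
    unfolding Rset_def using finB by (auto intro: card_image_le)
  obtain BR where BR: "BR \<subseteq> Rset" "VS.independent BR" "Rset \<subseteq> VS.span BR"
    using VS.maximal_independent_subset[of Rset] by blast
  have finBR: "finite BR" using BR(1) finR finite_subset by blast
  have cardBR: "card BR \<le> card (Bv G)" using card_mono[OF finR BR(1)] cardR by simp
  obtain BB where BB: "BR \<subseteq> BB" "BB \<subseteq> CW" "VS.independent BB" "CW \<subseteq> VS.span BB"
    using VS.maximal_independent_subset_extend[of BR CW] BR(1,2) Rset_CW by blast
  have bndBB: "finite BB \<and> card BB \<le> card (ev ` W)"
    using VS.independent_span_bound[OF finite_imageI[OF finW] BB(3)] BB(2) CW_span by blast
  have finBB: "finite BB" using bndBB by simp
  have "ev ` W \<subseteq> VS.span BB" using BB(4) CW_span VS.span_superset[of "ev ` W"] by blast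
  then have "card (ev ` W) \<le> card BB"
    using VS.independent_span_bound[OF finBB indep_ev[OF finW]] by blast
  then have cardBB: "card BB = card W" using bndBB card_ev[OF finW] by simp
  define X where "X = BB - BR"
  have cardX: "card X = card BB - card BR" unfolding X_def using BB(1) finBR by (simp add: card_Diff_subset)
  have cardX2: "d + 1 \<le> card X" using cardX cardBB cardBR dle by linarith
  have finX: "finite X" using finBB X_def by simp
  have XBB: "X \<subseteq> BB" unfolding X_def by blast
  obtain I where I: "I \<subseteq> Phi ` X" "VS.independent I" "Phi ` X \<subseteq> VS.span I"
    using VS.maximal_independent_subset[of "Phi ` X"] by blast
  have cardI: "finite I \<and> card I \<le> r + 1"
    using indep_cvec_card[OF I(2)] I(1) Phi_cv by blast
  define X0 where "X0 = inv_into X Phi ` I"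
  have X0X: "X0 \<subseteq> X" unfolding X0_def using I(1) by (auto intro: inv_into_into)
  have invX: "inv_into X Phi v \<in> X \<and> Phi (inv_into X Phi v) = v" if "v \<in> I" for v
  proof -
    have "v \<in> Phi ` X" using I(1) that by blast
    then show ?thesis by (simp add: inv_into_into f_inv_into_f)
  qed
  have finX0: "finite X0" and cardX0: "card X0 \<le> r + 1"
    unfolding X0_def using cardI card_image_le[of I "inv_into X Phi"] by auto
  have "card (X - X0) = card X - card X0" using X0X finX0 by (simp add: card_Diff_subset)
  then have "d - r \<le> card (X - X0)" using cardX2 cardX0 by linarith
  then obtain X1 where X1: "X1 \<subseteq> X - X0" "card X1 = d - r" "finite X1"
    by (rule obtain_subset_with_card_n)
  have "card {r+1..d} = d - r" by simp
  then obtain h where h: "bij_betw h X1 {r+1..d}"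
    using finite_same_card_bij[OF X1(3), of "{r+1..d}"] X1(2) by auto
  define y where "y z = (if z \<in> X1 then ev (h z) else (0 :: nat \<Rightarrow> complex))" for z :: "'v \<Rightarrow> complex"
  obtain Y where Y: "Vector_Spaces.linear sc sc Y" "\<forall>x\<in>BB. Y x = y x" "range Y = VS.span (y ` BB)"
    using VP.linear_independent_extend_subspace[OF BB(3), of y] by blast
  define U where "U = VS.span (ev ` {r+1..d})"
  have Uchar: "U = {x. \<forall>i. i \<notin> {r+1..d} \<longrightarrow> x i = 0}" unfolding U_def by (rule span_ev) simp
  have yU: "y z \<in> U" for z
  proof (cases "z \<in> X1")
    case True
    then have "h z \<in> {r+1..d}" using h bij_betw_apply by metis
    then show ?thesis using True unfolding y_def U_def by (simp add: VS.span_base)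
  next
    case False
    then show ?thesis unfolding y_def U_def by (simp add: VS.span_zero)
  qed
  have "range Y \<subseteq> U" unfolding Y(3) U_def
    by (rule VS.span_minimal) (use yU in \<open>auto simp: U_def VS.subspace_span\<close>)
  then have YU: "Y c \<in> U" for c by blast
  have YUz: "Y c i = 0" if "i \<le> r \<or> d < i" for c i using YU[of c] that unfolding Uchar by auto
  define That where "That w = T w + Y (ev w)" for w
  have restr: "That w i = T w i" if "i \<le> r" for w i using YUz[of i] that by (simp add: That_def)
  have That_hi: "That w i = 0" if "w \<in> W" "d < i" for w i
    using Tz[OF that(1), of i] YUz[of i "ev w"] that assms(4) by (simp add: That_def)
  have That_cv: "That w \<in> cvec (d + 1)" if "w \<in> W" for w
    using That_hi[OF that] unfolding cvec_def by simp
  have T_eq0: "T w = 0" if "w \<in> W" "\<forall>i\<le>r. That w i = 0" for w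
  proof
    fix i show "T w i = 0 i"
      using that restr[of i w] Tz[OF that(1), of i] by (cases "i \<le> r") auto
  qed
  have That_nz: "That w \<noteq> 0" if "w \<in> W" for w
    using T_eq0[OF that] Tcv(2)[OF that] by auto
  define Lh where "Lh c = Phi c + Y c" for c
  have linLh: "Vector_Spaces.linear sc sc Lh" unfolding Lh_def
    by (rule VP.linear_compose_add[OF linPhi Y(1)])
  have Lh_ev: "Lh (ev w) = That w" if "w \<in> W" for w using Phi_ev[OF that] by (simp add: Lh_def That_def)
  have Lh_sum: "Lh c = (\<Sum>w\<in>W. sc (c w) (That w))" if "c \<in> CW" for c
  proof -
    have "c = (\<Sum>w\<in>W. sc (c w) (ev w))" using that unfolding CW_def by (intro expand_fun[OF finW]) simp
    then have "Lh c = Lh (\<Sum>w\<in>W. sc (c w) (ev w))" by simp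
    also have "\<dots> = (\<Sum>w\<in>W. sc (c w) (Lh (ev w)))"
      by (simp add: VP.linear_sum[OF linLh] VP.linear_scale[OF linLh])
    also have "\<dots> = (\<Sum>w\<in>W. sc (c w) (That w))" by (intro sum.cong) (simp_all add: Lh_ev)
    finally show ?thesis .
  qed
  have Y_BR: "Y c = 0" if "c \<in> VS.span BR" for c
  proof (rule VP.linear_eq_0_on_span[OF Y(1) _ that])
    fix x assume "x \<in> BR"
    then have "x \<in> BB" "x \<notin> X1" using BB(1) X1(1) unfolding X_def by auto
    then show "Y x = 0" using Y(2) by (simp add: y_def)
  qed
  have spanR: "VS.span Rset \<subseteq> VS.span BR"
    by (rule VS.span_minimal[OF BR(3) VS.subspace_span])
  have rel: "(\<Sum>w\<in>Wv G. sc (c w) (That w)) = 0"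
    if b: "b \<in> Bv G" and c: "\<forall>w. w \<notin> nbrs G b \<longrightarrow> c w = 0" "(\<Sum>w\<in>Wv G. sc (c w) (T w)) = 0" for b c
  proof -
    have P0: "Phi c = 0" using c(2) unfolding Phi_def W_def .
    have "c \<in> VS.span {cbf b}" using cbf(3)[OF b c(1) P0] .
    moreover have "VS.span {cbf b} \<subseteq> VS.span Rset" using b unfolding Rset_def by (intro VS.span_mono) auto
    ultimately have "Y c = 0" using spanR Y_BR by blast
    moreover have "c \<in> CW" using c(1) nbW[OF b] unfolding CW_def by blast
    ultimately have "(\<Sum>w\<in>W. sc (c w) (That w)) = 0" using Lh_sum[of c] P0 by (simp add: Lh_def)
    then show ?thesis unfolding W_def .
  qed
  have LB1: "cdim (That ` nbrs G b) \<le> 2" if b: "b \<in> Bv G" for b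
  proof (rule lift_black(1)[OF G T b])
    fix w i assume "w \<in> Wv G" "i \<le> r" then show "That w i = T w i" by (simp add: restr)
  next
    fix c assume "\<forall>w. w \<notin> nbrs G b \<longrightarrow> c w = 0" "(\<Sum>w\<in>Wv G. sc (c w) (T w)) = 0"
    then show "(\<Sum>w\<in>Wv G. sc (c w) (That w)) = 0" by (rule rel[OF b])
  qed
  have LB2: "x = 0" if b: "b \<in> Bv G" and x: "x \<in> VS.span (That ` nbrs G b)" "\<forall>i\<le>r. x i = 0" for b x
  proof (rule lift_black(2)[OF G T b _ _ x])
    fix w i assume "w \<in> Wv G" "i \<le> r" then show "That w i = T w i" by (simp add: restr)
  next
    fix c assume "\<forall>w. w \<notin> nbrs G b \<longrightarrow> c w = 0" "(\<Sum>w\<in>Wv G. sc (c w) (T w)) = 0"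
    then show "(\<Sum>w\<in>Wv G. sc (c w) (That w)) = 0" by (rule rel[OF b])
  qed
  have Tnp: "\<forall>b\<in>Bv G. \<forall>d1\<in>darts G. \<forall>d2\<in>darts G.
         vtx G d1 = b \<longrightarrow> vtx G d2 = b \<longrightarrow> d1 \<noteq> d2 \<longrightarrow>
         \<not> proj_eq (T (vtx G (alph G d1))) (T (vtx G (alph G d2)))"
    using T unfolding tcd_map_def by (elim conjE) assumption
  have np: "\<not> proj_eq (That (vtx G (alph G d1))) (That (vtx G (alph G d2)))"
    if "b \<in> Bv G" "d1 \<in> darts G" "d2 \<in> darts G" "vtx G d1 = b" "vtx G d2 = b" "d1 \<noteq> d2" for b d1 d2
  proof
    assume pe: "proj_eq (That (vtx G (alph G d1))) (That (vtx G (alph G d2)))"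
    have w1: "vtx G (alph G d1) \<in> W" using btb_BW[OF G that(2)] that(1,4) W_def by simp
    have w2: "vtx G (alph G d2) \<in> W" using btb_BW[OF G that(3)] that(1,5) W_def by simp
    have "proj_eq (T (vtx G (alph G d1))) (T (vtx G (alph G d2)))"
      by (rule proj_lift[of r That "vtx G (alph G d1)" T "vtx G (alph G d2)", OF restr restr Tz[OF w1] Tz[OF w2] pe])
    moreover have "\<not> proj_eq (T (vtx G (alph G d1))) (T (vtx G (alph G d2)))"
      using Tnp[rule_format, OF that(1) that(2) that(3) that(4) that(5) that(6)] .
    ultimately show False by contradiction
  qed
  have tcdH: "tcd_map G d That"
    unfolding tcd_map_def
  proof (intro conjI ballI allI impI)
    fix w assume "w \<in> Wv G"
    then have "w \<in> W" using W_def by simp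
    then show "That w \<in> cvec (d + 1)" "That w \<noteq> (\<lambda>i. 0)"
      using That_cv That_nz unfolding zero_fun_lam by auto
  next
    fix b d1 d2 assume "b \<in> Bv G" "d1 \<in> darts G" "d2 \<in> darts G" "vtx G d1 = b" "vtx G d2 = b" "d1 \<noteq> d2"
    then show "\<not> proj_eq (That (vtx G (alph G d1))) (That (vtx G (alph G d2)))" by (rule np)
  next
    fix b assume "b \<in> Bv G" then show "cdim (That ` nbrs G b) \<le> 2" by (rule LB1)
  qed
  define S where "S = VS.span (That ` W)"
  have subS: "VS.subspace S" unfolding S_def by (rule VS.subspace_span)
  have LhS: "Lh c \<in> S" if "c \<in> CW" for c
    unfolding Lh_sum[OF that] S_def by (intro VS.span_sum VS.span_scale VS.span_base) auto
  have BBCW: "x \<in> CW" if "x \<in> BB" for x using BB(2) that by blast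
  have IS: "I \<subseteq> S"
  proof
    fix v assume v: "v \<in> I"
    define x0 where "x0 = inv_into X Phi v"
    have x0: "x0 \<in> X" "Phi x0 = v" using invX[OF v] x0_def by auto
    have "x0 \<in> X0" using v x0_def X0_def by blast
    then have "x0 \<notin> X1" using X1(1) by blast
    moreover have "x0 \<in> BB" using x0(1) XBB by blast
    ultimately have "Y x0 = 0" using Y(2) by (simp add: y_def)
    then have "Lh x0 = v" using x0 by (simp add: Lh_def)
    then show "v \<in> S" using LhS[OF BBCW[OF \<open>x0 \<in> BB\<close>]] by simp
  qed
  have spanIS: "VS.span I \<subseteq> S" by (rule VS.span_minimal[OF IS subS])
  have PhiXS: "Phi x \<in> S" if "x \<in> X" for x using I(3) that spanIS by blast
  have "Phi ` BB \<subseteq> S"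
  proof
    fix v assume "v \<in> Phi ` BB"
    then obtain x where x: "x \<in> BB" "v = Phi x" by blast
    show "v \<in> S"
    proof (cases "x \<in> BR")
      case True
      then have "Phi x = 0" using BR(1) Rset_Phi by blast
      then show ?thesis using x(2) VS.subspace_0[OF subS] by simp
    next
      case False
      then show ?thesis using x PhiXS unfolding X_def by blast
    qed
  qed
  then have spPhiBB: "VS.span (Phi ` BB) \<subseteq> S" by (rule VS.span_minimal[OF _ subS])
  have TWS: "T ` W \<subseteq> S"
  proof
    fix v assume "v \<in> T ` W"
    then obtain w where w: "w \<in> W" "v = T w" by blast
    have "ev w \<in> VS.span BB" using ev_CW[OF w(1)] BB(4) by blast
    then have "Phi (ev w) \<in> Phi ` VS.span BB" by blast
    then have "Phi (ev w) \<in> VS.span (Phi ` BB)" using VP.linear_span_image[OF linPhi, of BB] by simp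
    then show "v \<in> S" using spPhiBB w Phi_ev by auto
  qed
  obtain F0 where F0: "F0 \<subseteq> T ` W" "VS.independent F0" "card F0 = cdim (T ` W)"
    using cdim_obtain[of "T ` W"] finW by blast
  have "F0 \<subseteq> cvec (r + 1)" using F0(1) Tcv(1) by blast
  then have "cvec (r + 1) \<subseteq> VS.span F0" using indep_cvec_span F0(2,3) cdT by metis
  also have "\<dots> \<subseteq> VS.span (T ` W)" using F0(1) by (rule VS.span_mono)
  also have "\<dots> \<subseteq> S" using TWS by (rule VS.span_minimal[OF _ subS])
  finally have cvS: "cvec (r + 1) \<subseteq> S" .
  have evS: "ev i \<in> S" if "i < d + 1" for i
  proof (cases "i \<le> r")
    case True
    then have "ev i \<in> cvec (r + 1)" by (simp add: cvec_def ev_def)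
    then show ?thesis using cvS by blast
  next
    case False
    then have "i \<in> {r+1..d}" using that by simp
    then have "i \<in> h ` X1" using bij_betw_imp_surj_on[OF h] by simp
    then obtain z where z: "z \<in> X1" "h z = i" by (elim imageE) simp
    have zB: "z \<in> BB" "z \<in> X" using z(1) X1(1) XBB by blast+
    then have "Y z = ev i" using Y(2) z by (simp add: y_def)
    then have "ev i = Lh z - Phi z" by (simp add: Lh_def)
    moreover have "Lh z - Phi z \<in> S" by (rule VS.subspace_diff[OF subS LhS[OF BBCW[OF zB(1)]] PhiXS[OF zB(2)]])
    ultimately show ?thesis by simp
  qed
  have "ev ` {..<d + 1} \<subseteq> S" using evS by blast
  then have cvdS: "cvec (d + 1) \<subseteq> S" unfolding cvec_span by (rule VS.span_minimal[OF _ subS])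
  have finTW: "finite (That ` W)" using finW by simp
  have TWcv: "That ` W \<subseteq> cvec (d + 1)" using That_cv by blast
  have "cdim (That ` W) \<le> d + 1"
  proof (rule cdim_le[OF finTW])
    fix F assume "F \<subseteq> That ` W" "VS.independent F"
    then have "F \<subseteq> cvec (d + 1)" using TWcv by blast
    then show "card F \<le> d + 1" using indep_cvec_card[OF \<open>VS.independent F\<close>] by blast
  qed
  moreover have "d + 1 \<le> cdim (That ` W)"
  proof -
    obtain J where J: "J \<subseteq> That ` W" "VS.independent J" "That ` W \<subseteq> VS.span J"
      using VS.maximal_independent_subset[of "That ` W"] by blast
    have finJ: "finite J" using J(1) finTW finite_subset by blast
    have "S \<subseteq> VS.span J" unfolding S_def by (rule VS.span_minimal[OF J(3) VS.subspace_span])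
    moreover have "ev ` {..<d+1} \<subseteq> cvec (d + 1)" unfolding cvec_span by (rule VS.span_superset)
    ultimately have "ev ` {..<d+1} \<subseteq> VS.span J" using cvdS by blast
    moreover have iev: "VS.independent (ev ` {..<d+1})" by (rule indep_ev) simp
    ultimately have "card (ev ` {..<d+1}) \<le> card J"
      using VS.independent_span_bound[OF finJ iev] by blast
    then have "d + 1 \<le> card J" using card_ev[of "{..<d+1}"] by simp
    also have "\<dots> \<le> cdim (That ` W)" by (rule cdim_ge[OF finTW J(1,2)])
    finally show ?thesis .
  qed
  ultimately have rankH: "tcd_rank G That = d" unfolding tcd_rank_def W_def by simp
  have csU: "csubspace (d + 1) (d - r) U"
    unfolding csubspace_def
  proof (intro exI[of _ "ev ` {r+1..d}"] conjI)
    show "ev ` {r + 1..d} \<subseteq> cvec (d + 1)" by (auto simp: cvec_def ev_def)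
    show "finite (ev ` {r + 1..d})" by simp
    show "card (ev ` {r + 1..d}) = d - r" by (simp add: card_ev)
    show "cindep (ev ` {r + 1..d})" by (simp add: cindep_iff indep_ev)
    show "U = cspan (ev ` {r + 1..d})" by (simp add: U_def cspan_eq)
  qed
  have csV: "csubspace (d + 1) (r + 1) (cvec (r + 1))"
    unfolding csubspace_def
  proof (intro exI[of _ "ev ` {..<r+1}"] conjI)
    show "ev ` {..<r+1} \<subseteq> cvec (d + 1)" using assms(4) by (auto simp: cvec_def ev_def)
    show "finite (ev ` {..<r+1})" by simp
    show "card (ev ` {..<r+1}) = r + 1" by (simp add: card_ev)
    show "cindep (ev ` {..<r+1})" by (simp add: cindep_iff indep_ev)
    show "cvec (r + 1) = cspan (ev ` {..<r+1})" by (simp add: cvec_span cspan_eq)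
  qed
  have adm: "admissible G That U"
    unfolding admissible_def
  proof (intro conjI ballI)
    fix w assume w: "w \<in> Wv G"
    show "That w \<notin> U"
    proof
      assume "That w \<in> U"
      then have "\<forall>i\<le>r. That w i = 0" unfolding Uchar by auto
      then show False using T_eq0 Tcv(2) w W_def by auto
    qed
  next
    fix b assume b: "b \<in> Bv G"
    show "U \<inter> cspan (That ` nbrs G b) = {\<lambda>i. 0}"
    proof
      show "U \<inter> cspan (That ` nbrs G b) \<subseteq> {\<lambda>i. 0}"
      proof
        fix x assume x: "x \<in> U \<inter> cspan (That ` nbrs G b)"
        then have "\<forall>i\<le>r. x i = 0" unfolding Uchar by auto
        then have "x = 0" using LB2[OF b] x cspan_eq by auto
        then show "x \<in> {\<lambda>i. 0}" by (simp add: zero_fun_lam)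
      qed
      show "{\<lambda>i. 0} \<subseteq> U \<inter> cspan (That ` nbrs G b)"
        unfolding zero_fun_lam cspan_eq U_def by (simp add: VS.span_zero)
    qed
  qed
  have UV: "U \<inter> cvec (r + 1) = {\<lambda>i. 0}"
  proof
    show "U \<inter> cvec (r + 1) \<subseteq> {\<lambda>i. 0}"
    proof
      fix x assume x: "x \<in> U \<inter> cvec (r + 1)"
      have "x i = 0" for i using x unfolding Uchar cvec_def by (cases "i \<le> r") auto
      then show "x \<in> {\<lambda>i. 0}" by auto
    qed
    show "{\<lambda>i. 0} \<subseteq> U \<inter> cvec (r + 1)" unfolding Uchar cvec_def by auto
  qed
  have fin: "\<forall>w\<in>Wv G. \<exists>v. v \<in> cvec (r + 1) \<inter> cspan (U \<union> {That w}) \<and> v \<noteq> (\<lambda>i. 0) \<and>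
                          proj_eq (T w) (id v)"
  proof
    fix w assume w: "w \<in> Wv G"
    have "That w \<in> VS.span (U \<union> {That w})" by (simp add: VS.span_base)
    moreover have "Y (ev w) \<in> VS.span (U \<union> {That w})" using YU VS.span_base by blast
    ultimately have "That w - Y (ev w) \<in> VS.span (U \<union> {That w})" by (rule VS.span_diff)
    then have "T w \<in> cspan (U \<union> {That w})" by (simp add: That_def cspan_eq)
    moreover have "w \<in> W" using w W_def by simp
    then have "T w \<in> cvec (r + 1)" "T w \<noteq> (\<lambda>i. 0)" using Tcv unfolding zero_fun_lam by auto
    ultimately show "\<exists>v. v \<in> cvec (r + 1) \<inter> cspan (U \<union> {That w}) \<and> v \<noteq> (\<lambda>i. 0) \<and>
                          proj_eq (T w) (id v)"
      using proj_eq_refl by auto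
  qed
  have clin: "clinear_on (cvec (r + 1)) id" by (simp add: clinear_on_def)
  show ?thesis
    apply (rule exI[of _ That], rule exI[of _ U], rule exI[of _ "cvec (r + 1)"], rule exI[of _ id])
    using tcdH rankH csU adm csV UV clin bij_betw_id fin by blast
qed

end
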